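(* Let $\mathcal T$, $e_0$, $\mathcal T_0$, $\mathcal T_1$, the coordinate $x$, the set $\sigma_1$, the function $\mu^-(\lambda)$ and the functions $U(x,\lambda)$, $V(x,\lambda)$ on $[0,1]$ be as in the context. If $\lambda\in\mathbb C\setminus\sigma_1$, then $V(\cdot,\lambda)$ may be extended to a solution of $-y''=\lambda y$ on $\mathcal T_0$, depending only on $x\in[0,\infty)$, which is continuous and satisfies the jump conditions $y'(x^+)=y'(x^-)/\delta_R$ for even integers $x>0$ and $y'(x^+)=y'(x^-)/\delta_B$ for odd integers $x>0$ (hence the vertex conditions $\sum_{e\sim v}\partial_\nu y_e(v)=0$ at all vertices of $\mathcal T_0$ with $x>0$), and this extension is square integrable on $\mathcal T_0$. Analogously, $U(\cdot,\lambda)$ may be extended to a solution of $-y''=\lambda y$ on $\mathcal T_1$, depending only on $x\in(-\infty,1]$, which is continuous and satisfies $y'(x^-)=y'(x^+)/\delta_R$ for even integers $x<1$ and $y'(x^-)=y'(x^+)/\delta_B$ for odd integers $x<1$ (hence the vertex conditions at all vertices of $\mathcal T_1$ with $x<1$), and this extension is square integrable on $\mathcal T_1$.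
   Context: $\mathcal T$ is the infinite biregular tree: vertices split into classes $\mathcal V_R,\mathcal V_B$, each edge joins $\mathcal V_R$ to $\mathcal V_B$, vertices in $\mathcal V_B$ have degree $\delta_B+1$ and in $\mathcal V_R$ degree $\delta_R+1$ ($\delta_B,\delta_R\ge1$ integers); every edge is identified with $[0,1]$. Fix an edge $e_0=\{r_0,b_0\}$ with $r_0\in\mathcal V_R$, identified with $[0,1]$ so that $r_0\leftrightarrow0$, $b_0\leftrightarrow1$. $\mathcal T_0$ is the union of all nonbacktracking rays with vertex sequence $r_0,b_0,r_1,b_1,\dots$; a point of $\mathcal T_0$ gets coordinate $x\in[0,\infty)$ = its distance from $r_0$ (so even integers are $R$-vertices, odd integers $B$-vertices). $\mathcal T_1$ is the union of all nonbacktracking rays with vertex sequence $b_0,r_0,b_{-1},r_{-1},\dots$; a point gets coordinate $x=1-(\text{distance from }b_0)\in(-\infty,1]$. With $\omega=\sqrt\lambda$ put $c=\cos\omega$, $c'=-\omega\sin\omega$, $s=\sin\omega/\omega$, $s'=\cos\omega$, $M_0=\begin{pmatrix}c&s\\c'&s'\end{pmatrix}$, $J_B=\operatorname{diag}(1,1/\delta_B)$, $J_R=\operatorname{diag}(1,1/\delta_R)$, $T_0(\lambda)=J_RM_0J_BM_0$, and $\sigma_1=\{\lambda\in\mathbb C: T_0(\lambda)$ has an eigenvalue of modulus $(\delta_B\delta_R)^{-1/2}\}$. On $\mathbb C\setminus\sigma_1$, $\mu^-(\lambda)$ denotes the analytic choice of eigenvalue of $T_0(\lambda)$ with $|\mu^-(\lambda)|<(\delta_B\delta_R)^{-1/2}$.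 For $x\in[0,1]$, $V(x,\lambda)=sc(1+\tfrac1{\delta_B})\cos(\omega x)+[\mu^--c^2-\tfrac{sc'}{\delta_B}]\tfrac{\sin(\omega x)}{\omega}$ and $U(x,\lambda)=-sc(1+\tfrac1{\delta_R})\cos(\omega(1-x))-[\mu^--c^2-\tfrac{sc'}{\delta_R}]\tfrac{\sin(\omega(1-x))}{\omega}$. *)

theory Defs
  imports "HOL-Analysis.Analysis"
begin

definition mat2 :: "complex \<Rightarrow> complex \<Rightarrow> complex \<Rightarrow> complex \<Rightarrow> complex^2^2" where
  "mat2 a b c d = (\<chi> i j. if i = 1 then (if j = 1 then a else b) else (if j = 1 then c else d))"

definition is_eigenvalue :: "complex^2^2 \<Rightarrow> complex \<Rightarrow> bool" where
  "is_eigenvalue A \<mu> \<longleftrightarrow> (\<exists>v. v \<noteq> 0 \<and> A *v v = \<mu> *s v)"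

(* omega = sqrt lambda (principal branch; all quantities below are even in omega) *)
definition om :: "complex \<Rightarrow> complex" where "om la = csqrt la"

definition sn :: "complex \<Rightarrow> complex \<Rightarrow> complex" where
  "sn w t = (if w = 0 then t else sin (w * t) / w)"

definition cc :: "complex \<Rightarrow> complex" where "cc la = cos (om la)"
definition cc' :: "complex \<Rightarrow> complex" where "cc' la = - om la * sin (om la)"
definition ss :: "complex \<Rightarrow> complex" where "ss la = sn (om la) 1"
definition ss' :: "complex \<Rightarrow> complex" where "ss' la = cos (om la)"

definition M0 :: "complex \<Rightarrow> complex^2^2" where
  "M0 la = mat2 (cc la) (ss la) (cc' la) (ss' la)"

definition Jmat :: "nat \<Rightarrow> complex^2^2" where
  "Jmat \<delta> = mat2 1 0 0 (1 / of_nat \<delta>)"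

definition T0 :: "nat \<Rightarrow> nat \<Rightarrow> complex \<Rightarrow> complex^2^2" where
  "T0 \<delta>B \<delta>R la = Jmat \<delta>R ** M0 la ** Jmat \<delta>B ** M0 la"

definition sigma1 :: "nat \<Rightarrow> nat \<Rightarrow> complex set" where
  "sigma1 \<delta>B \<delta>R = {la. \<exists>\<mu>. is_eigenvalue (T0 \<delta>B \<delta>R la) \<mu> \<and>
                              cmod \<mu> = 1 / sqrt (real (\<delta>B * \<delta>R))}"

(* the eigenvalue of T_0(lambda) of modulus < (delta_B delta_R)^(-1/2) (unique off sigma1) *)
definition mu_minus :: "nat \<Rightarrow> nat \<Rightarrow> complex \<Rightarrow> complex" where
  "mu_minus \<delta>B \<delta>R la = (THE \<mu>. is_eigenvalue (T0 \<delta>B \<delta>R la) \<mu> \<and>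
                              cmod \<mu> < 1 / sqrt (real (\<delta>B * \<delta>R)))"

definition Vfun :: "nat \<Rightarrow> nat \<Rightarrow> real \<Rightarrow> complex \<Rightarrow> complex" where
  "Vfun \<delta>B \<delta>R x la =
     ss la * cc la * (1 + 1 / of_nat \<delta>B) * cos (om la * of_real x)
     + (mu_minus \<delta>B \<delta>R la - (cc la)\<^sup>2 - ss la * cc' la / of_nat \<delta>B) * sn (om la) (of_real x)"

definition Ufun :: "nat \<Rightarrow> nat \<Rightarrow> real \<Rightarrow> complex \<Rightarrow> complex" where
  "Ufun \<delta>B \<delta>R x la =
     - ss la * cc la * (1 + 1 / of_nat \<delta>R) * cos (om la * of_real (1 - x))
     - (mu_minus \<delta>B \<delta>R la - (cc la)\<^sup>2 - ss la * cc' la / of_nat \<delta>R) * sn (om la) (of_real (1 - x))"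

(* Number of edges of T_0 lying at coordinate level [n, n+1]:
   1 edge at [0,1]; each B-vertex (odd x) branches into delta_B forward edges,
   each R-vertex (even x > 0) into delta_R forward edges. *)
definition edges0 :: "nat \<Rightarrow> nat \<Rightarrow> nat \<Rightarrow> nat" where
  "edges0 \<delta>B \<delta>R n = \<delta>B ^ ((n + 1) div 2) * \<delta>R ^ (n div 2)"

(* Number of edges of T_1 lying at coordinate level [-k, 1-k]:
   1 edge at [0,1]; each R-vertex (even x < 1) branches into delta_R backward edges,
   each B-vertex (odd x < 1) into delta_B backward edges. *)
definition edges1 :: "nat \<Rightarrow> nat \<Rightarrow> nat \<Rightarrow> nat" where
  "edges1 \<delta>B \<delta>R k = \<delta>R ^ ((k + 1) div 2) * \<delta>B ^ (k div 2)"

(* A function y on T_0 depending only on x is determined by Y : [0,oo) -> C;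
   its L^2 norm squared on T_0 is  sum_n edges0 n * int_n^{n+1} |Y|^2. *)
definition weight0 :: "nat \<Rightarrow> nat \<Rightarrow> real \<Rightarrow> real" where
  "weight0 \<delta>B \<delta>R x = real (edges0 \<delta>B \<delta>R (nat \<lfloor>x\<rfloor>))"

(* for x in (-oo,1]: the edge [-k,1-k] containing x (a.e.) has k = nat (1 - ceiling x) *)
definition weight1 :: "nat \<Rightarrow> nat \<Rightarrow> real \<Rightarrow> real" where
  "weight1 \<delta>B \<delta>R x = real (edges1 \<delta>B \<delta>R (nat (1 - \<lceil>x\<rceil>)))"

definition jump_coeff :: "nat \<Rightarrow> nat \<Rightarrow> nat \<Rightarrow> complex" where
  "jump_coeff \<delta>B \<delta>R n = (if even n then of_nat \<delta>R else of_nat \<delta>B)"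

end

theory Submission
  imports Defs
begin


lemma mat2_nth: "mat2 a b c d $ 1 $ 1 = a" "mat2 a b c d $ 1 $ 2 = b"
  "mat2 a b c d $ 2 $ 1 = c" "mat2 a b c d $ 2 $ 2 = d"
  by (simp_all add: mat2_def)

lemma mat2_mult: "mat2 a b c d ** mat2 e f g h = mat2 (a*e+b*g) (a*f+b*h) (c*e+d*g) (c*f+d*h)"
  by (simp add: vec_eq_iff forall_2 matrix_matrix_mult_def sum_2 mat2_nth)

lemma eig_mat2: "is_eigenvalue (mat2 p q r s) \<mu> \<longleftrightarrow> (p - \<mu>)*(s - \<mu>) - q*r = 0"
proof
  assume "is_eigenvalue (mat2 p q r s) \<mu>"
  then obtain v where v: "v \<noteq> 0" "mat2 p q r s *v v = \<mu> *s v" unfolding is_eigenvalue_def by blast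
  have e1: "p * v$1 + q * v$2 = \<mu> * v$1" and e2: "r * v$1 + s * v$2 = \<mu> * v$2"
    using v(2) by (simp_all add: vec_eq_iff forall_2 matrix_vector_mult_def sum_2 mat2_nth)
  have "((p - \<mu>)*(s - \<mu>) - q*r) * v$1 = 0" using e1 e2 by algebra
  moreover have "((p - \<mu>)*(s - \<mu>) - q*r) * v$2 = 0" using e1 e2 by algebra
  moreover have "v$1 \<noteq> 0 \<or> v$2 \<noteq> 0" using v(1) by (auto simp: vec_eq_iff forall_2)
  ultimately show "(p - \<mu>)*(s - \<mu>) - q*r = 0" by auto
next
  assume d: "(p - \<mu>)*(s - \<mu>) - q*r = 0"
  have ok: "is_eigenvalue (mat2 p q r s) \<mu>" if "x \<noteq> 0 \<or> y \<noteq> 0" "p*x + q*y = \<mu>*x" "r*x+s*y = \<mu>*y" for x y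
    unfolding is_eigenvalue_def
    apply (rule exI[of _ "vector [x,y]"])
    using that by (auto simp: vec_eq_iff forall_2 matrix_vector_mult_def sum_2 mat2_nth)
  show "is_eigenvalue (mat2 p q r s) \<mu>"
  proof (cases "q \<noteq> 0 \<or> \<mu> - p \<noteq> 0")
    case True
    have "r*q + s*(\<mu>-p) - \<mu>*(\<mu>-p) = -((p - \<mu>)*(s - \<mu>) - q*r)" by (simp add: algebra_simps)
    then have "r*q + s*(\<mu>-p) = \<mu>*(\<mu>-p)" using d by simp
    then show ?thesis by (intro ok[of q "\<mu> - p"]) (use True in \<open>auto simp: algebra_simps\<close>)
  next
    case F: False
    show ?thesis
    proof (cases "\<mu> - s \<noteq> 0 \<or> r \<noteq> 0")
      case True
      show ?thesis by (rule ok[of "\<mu> - s" r]) (use True F in \<open>auto simp: algebra_simps\<close>)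
    next
      case False
      show ?thesis by (rule ok[of 1 0]) (use False F in auto)
    qed
  qed
qed



definition trT :: "complex \<Rightarrow> complex \<Rightarrow> complex \<Rightarrow> complex" where
  "trT a b c = c^2 + (c^2-1)/a + (c^2-1)/b + c^2/(a*b)"

lemma charpoly_id:
  fixes a b c s c' \<mu> :: complex
  assumes h: "s * c' = c^2 - 1" and a: "a \<noteq> 0" and b: "b \<noteq> 0"
  shows "(c * c + s * c'/a - \<mu>) * ((c' * s + c * c/a)/b - \<mu>) - (c * s + s * c/a) * ((c' * c + c * c'/a)/b)
       = \<mu>^2 - trT a b c * \<mu> + 1/(a*b)"
proof -
  have "(c * c + s * c'/a - \<mu>) * ((c' * s + c * c/a)/b - \<mu>) - (c * s + s * c/a) * ((c' * c + c * c'/a)/b)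
      = \<mu>^2 - (c * c + s * c'/a + (c' * s + c * c/a)/b) * \<mu> + (c * c - s * c')^2/(a*b)"
    using a b by (simp add: field_simps power2_eq_square)
  also have "\<dots> = \<mu>^2 - trT a b c * \<mu> + 1/(a*b)"
    using h by (simp add: trT_def power2_eq_square mult.commute add_divide_distrib)
  finally show ?thesis .
qed

lemma step_eig:
  fixes a b c s c' \<mu> :: complex
  assumes h: "s * c' = c^2 - 1" and a: "a \<noteq> 0" and b: "b \<noteq> 0"
    and m: "\<mu>^2 - trT a b c * \<mu> + 1/(a*b) = 0"
  defines "x0 \<equiv> s * c * (1+1/a)" and "y0 \<equiv> \<mu> - c^2 - s * c'/a"
  defines "x1 \<equiv> c * x0 + s * y0" and "y1 \<equiv> (c' * x0 + c * y0)/a"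
  shows "c * x1 + s * y1 = \<mu> * x0" "(c' * x1 + c * y1)/b = \<mu> * y0"
proof -
  show "c * x1 + s * y1 = \<mu> * x0" unfolding x1_def y1_def x0_def y0_def using a
    by (simp add: field_simps power2_eq_square)
  have "(c' * x1 + c * y1)/b - \<mu> * y0 = - (\<mu>^2 - trT a b c * \<mu> + 1/(a*b))"
    unfolding x1_def y1_def x0_def y0_def trT_def using a b h
    by (simp add: field_simps power2_eq_square) algebra
  then show "(c' * x1 + c * y1)/b = \<mu> * y0" using m by simp
qed

lemma sc_id: "ss la * cc' la = (cc la)^2 - 1"
proof (cases "om la = 0")
  case True then show ?thesis by (simp add: ss_def cc'_def cc_def sn_def)
next
  case False
  have "sin (om la)^2 + cos (om la)^2 = 1" by (rule sin_cos_squared_add)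
  then show ?thesis using False by (simp add: ss_def cc'_def cc_def sn_def field_simps power2_eq_square)
qed

lemma T_eq: "Jmat \<beta> ** M0 la ** Jmat \<alpha> ** M0 la =
  mat2 (cc la * cc la + ss la * cc' la/of_nat \<alpha>) (cc la * ss la + ss la * cc la/of_nat \<alpha>)
       ((cc' la * cc la + cc la * cc' la/of_nat \<alpha>)/of_nat \<beta>) ((cc' la * ss la + cc la * cc la/of_nat \<alpha>)/of_nat \<beta>)"
  by (simp add: Jmat_def M0_def ss'_def cc_def[symmetric] mat2_mult vec_eq_iff forall_2 mat2_nth add_divide_distrib divide_divide_eq_left mult.commute)

lemma eig_T:
  assumes "\<alpha> \<ge> 1" "\<beta> \<ge> 1"
  shows "is_eigenvalue (Jmat \<beta> ** M0 la ** Jmat \<alpha> ** M0 la) \<mu> \<longleftrightarrow>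
         \<mu>^2 - trT (of_nat \<alpha>) (of_nat \<beta>) (cc la) * \<mu> + 1/(of_nat \<alpha> * of_nat \<beta>) = 0"
  unfolding T_eq eig_mat2
  by (subst charpoly_id[OF sc_id]) (use assms in auto)

lemma trT_sym: "trT a b c = trT b a c"
  by (simp add: trT_def mult.commute add_ac)

lemma quad_roots:
  fixes t d :: complex
  obtains x1 x2 where "\<And>y. y^2 - t*y + d = 0 \<longleftrightarrow> y = x1 \<or> y = x2" "x1 * x2 = d"
proof -
  define x1 where "x1 = (t + csqrt (t^2 - 4*d))/2"
  define x2 where "x2 = t - x1"
  have sq: "(csqrt (t^2 - 4*d))^2 = t^2 - 4*d" by simp
  have p: "x1 * x2 = d" unfolding x2_def x1_def
    using sq by (simp add: field_simps power2_eq_square)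
  have f: "y^2 - t*y + d = (y - x1)*(y - x2)" for y
    using p unfolding x2_def by (simp add: algebra_simps power2_eq_square)
  show ?thesis by (rule that[of x1 x2]) (auto simp: f p)
qed

lemma mu_props:
  assumes B: "\<delta>B \<ge> 1" and R: "\<delta>R \<ge> 1" and ns: "la \<notin> sigma1 \<delta>B \<delta>R"
  shows "(mu_minus \<delta>B \<delta>R la)^2 - trT (of_nat \<delta>B) (of_nat \<delta>R) (cc la) * mu_minus \<delta>B \<delta>R la
           + 1/(of_nat \<delta>B * of_nat \<delta>R) = 0"
    and "cmod (mu_minus \<delta>B \<delta>R la) < 1 / sqrt (real (\<delta>B * \<delta>R))"
proof -
  define t where "t = trT (of_nat \<delta>B) (of_nat \<delta>R) (cc la)"
  define d :: complex where "d = 1/(of_nat \<delta>B * of_nat \<delta>R)"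
  define r where "r = 1 / sqrt (real (\<delta>B * \<delta>R))"
  have rpos: "r > 0" using B R by (simp add: r_def)
  have eig: "is_eigenvalue (T0 \<delta>B \<delta>R la) \<mu> \<longleftrightarrow> \<mu>^2 - t*\<mu> + d = 0" for \<mu>
    unfolding T0_def t_def d_def using eig_T[OF B R] by simp
  have cd: "cmod d = r * r"
  proof -
    have "cmod d = 1 / (real \<delta>B * real \<delta>R)" unfolding d_def
      by (simp add: norm_divide norm_mult)
    also have "\<dots> = r * r" unfolding r_def using B R
      by (simp add: real_sqrt_mult field_simps)
    finally show ?thesis .
  qed
  obtain x1 x2 where roots: "\<And>y. y^2 - t*y + d = 0 \<longleftrightarrow> y = x1 \<or> y = x2" and pr: "x1 * x2 = d"
    using quad_roots[of t d] by blast
  have nr: "cmod y \<noteq> r" if "y^2 - t*y + d = 0" for y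
    using ns that eig unfolding sigma1_def r_def by blast
  have n1: "cmod x1 \<noteq> r" and n2: "cmod x2 \<noteq> r" using nr roots by blast+
  have pm: "cmod x1 * cmod x2 = r * r" using pr cd by (metis norm_mult)
  have ex: "\<exists>y. (y^2 - t*y + d = 0) \<and> cmod y < r"
  proof (cases "cmod x1 < r")
    case True then show ?thesis using roots by blast
  next
    case False
    then have "cmod x1 > r" using n1 by simp
    have "cmod x2 < r"
    proof (rule ccontr)
      assume "\<not> cmod x2 < r"
      then have "r \<le> cmod x2" by simp
      then have "r*r < cmod x1 * cmod x2" using \<open>cmod x1 > r\<close> rpos
        by (intro mult_less_le_imp_less) auto
      with pm show False by simp
    qed
    then show ?thesis using roots by blast
  qed
  have un: "y = z" if "y^2 - t*y + d = 0" "cmod y < r" "z^2 - t*z + d = 0" "cmod z < r" for y z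
  proof (rule ccontr)
    assume "y \<noteq> z"
    then have "cmod y * cmod z = r * r" using that(1,3) roots pm by (metis mult.commute)
    moreover have "cmod y * cmod z < r * r"
      using that(2,4) by (simp add: mult_strict_mono')
    ultimately show False by simp
  qed
  have "\<exists>!\<mu>. is_eigenvalue (T0 \<delta>B \<delta>R la) \<mu> \<and> cmod \<mu> < r"
    using ex un eig by blast
  then have "is_eigenvalue (T0 \<delta>B \<delta>R la) (mu_minus \<delta>B \<delta>R la) \<and> cmod (mu_minus \<delta>B \<delta>R la) < r"
    unfolding mu_minus_def r_def by (rule theI')
  then show "(mu_minus \<delta>B \<delta>R la)^2 - trT (of_nat \<delta>B) (of_nat \<delta>R) (cc la) * mu_minus \<delta>B \<delta>R la
           + 1/(of_nat \<delta>B * of_nat \<delta>R) = 0"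
    and "cmod (mu_minus \<delta>B \<delta>R la) < 1 / sqrt (real (\<delta>B * \<delta>R))"
    using eig unfolding t_def d_def r_def by auto
qed



definition Phi :: "complex \<Rightarrow> complex \<times> complex \<Rightarrow> real \<Rightarrow> complex" where
  "Phi w v t = fst v * cos (w * of_real t) + snd v * sn w (of_real t)"
definition dPhi :: "complex \<Rightarrow> complex \<times> complex \<Rightarrow> real \<Rightarrow> complex" where
  "dPhi w v t = - fst v * w * sin (w * of_real t) + snd v * cos (w * of_real t)"

lemma vd_from_field:
  assumes "(g has_field_derivative g') (at (of_real x))" "\<And>y. F y = g (of_real y)"
  shows "(F has_vector_derivative g') (at x within S)"
proof -
  have "F = (\<lambda>y. g (of_real y))" using assms(2) by auto
  then show ?thesis using has_vector_derivative_real_field[OF assms(1)] by simp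
qed

lemma Phi_deriv: "((\<lambda>x. Phi w v (x - r)) has_vector_derivative dPhi w v (x - r)) (at x within S)"
proof (cases "w = 0")
  case True
  show ?thesis
    by (rule vd_from_field[where g="\<lambda>z. fst v + snd v * (z - of_real r)"])
       (auto intro!: derivative_eq_intros simp: Phi_def dPhi_def sn_def True)
next
  case False
  show ?thesis
    by (rule vd_from_field[where g="\<lambda>z. fst v * cos (w * (z - of_real r)) + snd v * (sin (w * (z - of_real r)) / w)"])
       (use False in \<open>auto intro!: derivative_eq_intros simp: Phi_def dPhi_def sn_def algebra_simps\<close>)
qed

lemma dPhi_deriv: "((\<lambda>x. dPhi w v (x - r)) has_vector_derivative (- (w^2) * Phi w v (x - r))) (at x within S)"
proof (cases "w = 0")
  case True
  show ?thesis
    by (rule vd_from_field[where g="\<lambda>z. snd v"])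
       (auto intro!: derivative_eq_intros simp: Phi_def dPhi_def sn_def True)
next
  case False
  show ?thesis
    by (rule vd_from_field[where g="\<lambda>z. - fst v * w * sin (w * (z - of_real r)) + snd v * cos (w * (z - of_real r))"])
       (use False in \<open>auto intro!: derivative_eq_intros simp: Phi_def dPhi_def sn_def algebra_simps power2_eq_square\<close>)
qed

lemma Phi_cont: "continuous_on S (\<lambda>x. Phi w v (x - r))"
proof (rule continuous_at_imp_continuous_on, intro ballI)
  fix x show "isCont (\<lambda>x. Phi w v (x - r)) x"
    using has_vector_derivative_continuous[OF Phi_deriv[of w v r x UNIV]] by simp
qed

lemma Phi_0: "Phi w v 0 = fst v" and dPhi_0: "dPhi w v 0 = snd v"
  by (simp_all add: Phi_def dPhi_def sn_def)



definition stepf :: "complex \<Rightarrow> complex \<Rightarrow> complex \<times> complex \<Rightarrow> complex \<times> complex" where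
  "stepf w g v = (cos w * fst v + sn w 1 * snd v, (- w * sin w * fst v + cos w * snd v) / g)"
definition jc :: "nat \<Rightarrow> nat \<Rightarrow> nat \<Rightarrow> complex" where
  "jc \<alpha> \<beta> n = (if even n then of_nat \<beta> else of_nat \<alpha>)"
primrec stt :: "complex \<Rightarrow> nat \<Rightarrow> nat \<Rightarrow> complex \<times> complex \<Rightarrow> nat \<Rightarrow> complex \<times> complex" where
  "stt w \<alpha> \<beta> v0 0 = v0"
| "stt w \<alpha> \<beta> v0 (Suc n) = stepf w (jc \<alpha> \<beta> (Suc n)) (stt w \<alpha> \<beta> v0 n)"
definition smul :: "complex \<Rightarrow> complex \<times> complex \<Rightarrow> complex \<times> complex" where
  "smul k v = (k * fst v, k * snd v)"
definition nrm :: "complex \<times> complex \<Rightarrow> real" where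
  "nrm v = cmod (fst v) + cmod (snd v)"

lemma stepf_smul: "stepf w g (smul k v) = smul k (stepf w g v)"
  by (simp add: stepf_def smul_def algebra_simps)

lemma Phi_smul: "Phi w (smul k v) t = k * Phi w v t"
  by (simp add: Phi_def smul_def algebra_simps)

lemma nrm_smul: "nrm (smul k v) = cmod k * nrm v"
  by (simp add: nrm_def smul_def norm_mult algebra_simps)

lemma smul_mult: "smul a (smul b v) = smul (a*b) v"
  by (simp add: smul_def)

lemma Phi_1: "Phi w v 1 = fst (stepf w g v)"
  by (simp add: Phi_def stepf_def sn_def)

lemma dPhi_1: "snd (stepf w g v) = dPhi w v 1 / g"
  by (simp add: dPhi_def stepf_def)

lemma stt_pow:
  assumes eig: "stepf w (of_nat \<beta>) (stepf w (of_nat \<alpha>) v0) = smul \<mu> v0"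
  shows "stt w \<alpha> \<beta> v0 n = smul (\<mu> ^ (n div 2)) (stt w \<alpha> \<beta> v0 (n mod 2))"
proof -
  have A: "stt w \<alpha> \<beta> v0 (2*k) = smul (\<mu>^k) v0" for k
  proof (induction k)
    case 0 then show ?case by (simp add: smul_def)
  next
    case (Suc k)
    have "stt w \<alpha> \<beta> v0 (2 * Suc k) = stepf w (of_nat \<beta>) (stepf w (of_nat \<alpha>) (stt w \<alpha> \<beta> v0 (2*k)))"
      by (simp add: jc_def)
    also have "\<dots> = smul (\<mu>^Suc k) v0" using Suc eig by (simp add: stepf_smul smul_mult mult.commute)
    finally show ?case .
  qed
  have B: "stt w \<alpha> \<beta> v0 (2*k+1) = smul (\<mu>^k) (stt w \<alpha> \<beta> v0 1)" for k
    using A[of k] by (simp add: jc_def stepf_smul)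
  show ?thesis
  proof (cases "even n")
    case True then obtain k where "n = 2*k" by blast
    then show ?thesis using A by simp
  next
    case False then obtain k where "n = 2*k+1" using oddE by blast
    then show ?thesis using B by simp
  qed
qed


lemma construct0:
  fixes w \<mu> :: complex and \<alpha> \<beta> :: nat and v0 :: "complex \<times> complex"
  assumes a1: "\<alpha> \<ge> 1" and b1: "\<beta> \<ge> 1"
    and eig: "stepf w (of_nat \<beta>) (stepf w (of_nat \<alpha>) v0) = smul \<mu> v0"
    and q1: "(cmod \<mu>)^2 * (real \<alpha> * real \<beta>) < 1"
  shows "\<exists>(Y::real\<Rightarrow>complex) (D::nat\<Rightarrow>real\<Rightarrow>complex).
     (\<forall>x\<in>{0..1}. Y x = Phi w v0 x) \<and> continuous_on {0..} Y
   \<and> (\<forall>n::nat. \<forall>x\<in>{real n..real n + 1}. (Y has_vector_derivative D n x) (at x within {real n..real n + 1})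
         \<and> (D n has_vector_derivative (- (w^2) * Y x)) (at x within {real n..real n + 1}))
   \<and> (\<forall>n::nat. n \<ge> 1 \<longrightarrow> D n (real n) = D (n - 1) (real n) / jc \<alpha> \<beta> n)
   \<and> (\<lambda>x. real (\<alpha> ^ ((nat \<lfloor>x\<rfloor> + 1) div 2) * \<beta> ^ (nat \<lfloor>x\<rfloor> div 2)) * (cmod (Y x))^2) integrable_on {0..}"
proof -
  define S where "S = stt w \<alpha> \<beta> v0"
  define Y where "Y x = Phi w (S (nat \<lfloor>x\<rfloor>)) (x - real (nat \<lfloor>x\<rfloor>))" for x
  define D where "D n x = dPhi w (S n) (x - real n)" for n x
  have YB: "Y x = Phi w (S n) (x - real n)" if x: "x \<in> {real n..real n+1}" for n x
  proof (cases "x < real n + 1")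
    case True
    then have "\<lfloor>x\<rfloor> = int n" using x by (simp add: floor_eq_iff)
    then show ?thesis by (simp add: Y_def)
  next
    case False
    then have xe: "x = real n + 1" using x by simp
    then have "x = real (Suc n)" by simp
    then have "nat \<lfloor>x\<rfloor> = Suc n" by simp
    then have "Y x = Phi w (S (Suc n)) 0" using xe by (simp add: Y_def)
    also have "\<dots> = Phi w (S n) 1" by (simp add: Phi_0 S_def Phi_1[symmetric])
    finally show ?thesis using xe by simp
  qed
  have init: "\<forall>x\<in>{0..1}. Y x = Phi w v0 x"
    using YB[of _ 0] by (simp add: S_def)
  have der: "(Y has_vector_derivative D n x) (at x within {real n..real n + 1})
         \<and> (D n has_vector_derivative (- (w^2) * Y x)) (at x within {real n..real n + 1})"
    if x: "x \<in> {real n..real n + 1}" for n x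
  proof
    show "(Y has_vector_derivative D n x) (at x within {real n..real n + 1})"
      unfolding D_def
      by (rule has_vector_derivative_transform[OF x _ Phi_deriv]) (use YB in auto)
    show "(D n has_vector_derivative (- (w^2) * Y x)) (at x within {real n..real n + 1})"
      unfolding D_def YB[OF x] by (rule dPhi_deriv)
  qed
  have jump: "D n (real n) = D (n - 1) (real n) / jc \<alpha> \<beta> n" if "n \<ge> 1" for n
  proof -
    define m where "m = n - 1"
    have n: "n = Suc m" using that by (simp add: m_def)
    have "D n (real n) = snd (S (Suc m))" by (simp add: D_def dPhi_0 n)
    also have "\<dots> = dPhi w (S m) 1 / jc \<alpha> \<beta> n" by (simp add: S_def dPhi_1 n)
    also have "\<dots> = D (n - 1) (real n) / jc \<alpha> \<beta> n" by (simp add: D_def n)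
    finally show ?thesis .
  qed
  have cN: "continuous_on {0..real N} Y" for N
  proof (induction N)
    case 0 then show ?case by simp
  next
    case (Suc N)
    have "continuous_on {real N..real N + 1} Y"
      by (rule continuous_on_eq[OF Phi_cont]) (use YB in auto)
    then have "continuous_on ({0..real N} \<union> {real N..real N + 1}) Y"
      using Suc by (intro continuous_on_closed_Un) auto
    moreover have "{0..real N} \<union> {real N..real N + 1} = {0..real (Suc N)}" by auto
    ultimately show ?case by simp
  qed
  have cont: "continuous_on {0..} Y"
    unfolding continuous_on_eq_continuous_within
  proof
    fix x :: real assume x: "x \<in> {0..}"
    define N where "N = nat \<lceil>x\<rceil> + 1"
    have xN: "x < real N" unfolding N_def by linarith
    have "continuous (at x within {0..real N}) Y"
      using cN[of N] x xN unfolding continuous_on_eq_continuous_within by auto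
    moreover have "at x within {0..} = at x within {0..real N}"
      by (rule at_within_nhd[of x "{..<real N}"]) (use xN in auto)
    ultimately show "continuous (at x within {0..}) Y" by simp
  qed
  have integ: "(\<lambda>x. real (\<alpha> ^ ((nat \<lfloor>x\<rfloor> + 1) div 2) * \<beta> ^ (nat \<lfloor>x\<rfloor> div 2)) * (cmod (Y x))^2) integrable_on {0..}"
  proof -
    define f where "f x = real (\<alpha> ^ ((nat \<lfloor>x\<rfloor> + 1) div 2) * \<beta> ^ (nat \<lfloor>x\<rfloor> div 2)) * (cmod (Y x))^2" for x
    define W where "W n = real (\<alpha> ^ ((n + 1) div 2) * \<beta> ^ (n div 2))" for n
    define h where "h n x = W n * (cmod (Phi w (S n) (x - real n)))^2" for n x
    define q where "q = (cmod \<mu>)^2 * (real \<alpha> * real \<beta>)"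
    have q0: "0 \<le> q" and q1': "q < 1" using q1 by (auto simp: q_def)
    have f0: "0 \<le> f x" for x by (simp add: f_def)
    obtain K1 where K1: "\<forall>t\<in>{0..1}. cmod (Phi w (1,0) t) \<le> K1"
      using compact_imp_bounded[OF compact_continuous_image[OF Phi_cont[of "{0..1}" w "(1,0)" 0] compact_Icc]]
      unfolding bounded_iff by auto
    obtain K2 where K2: "\<forall>t\<in>{0..1}. cmod (Phi w (0,1) t) \<le> K2"
      using compact_imp_bounded[OF compact_continuous_image[OF Phi_cont[of "{0..1}" w "(0,1)" 0] compact_Icc]]
      unfolding bounded_iff by auto
    define K where "K = max 0 (max K1 K2)"
    have K0: "K \<ge> 0" by (simp add: K_def)
    have Phib: "cmod (Phi w v t) \<le> nrm v * K" if t: "t \<in> {0..1}" for v t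
    proof -
      have k1: "cmod (Phi w (1,0) t) \<le> K" using K1 t unfolding K_def by force
      have k2: "cmod (Phi w (0,1) t) \<le> K" using K2 t unfolding K_def by force
      have e: "Phi w v t = fst v * Phi w (1,0) t + snd v * Phi w (0,1) t" by (simp add: Phi_def)
      have "cmod (Phi w v t) \<le> cmod (fst v) * cmod (Phi w (1,0) t) + cmod (snd v) * cmod (Phi w (0,1) t)"
        unfolding e by (metis norm_mult norm_triangle_ineq)
      also have "\<dots> \<le> cmod (fst v) * K + cmod (snd v) * K"
        using k1 k2
        by (intro add_mono mult_left_mono) auto
      finally show ?thesis by (simp add: nrm_def algebra_simps)
    qed
    define C where "C = nrm v0 + nrm (S 1)"
    have nrm0: "nrm v \<ge> 0" for v by (simp add: nrm_def)
    have nrmS: "nrm (S n) \<le> cmod \<mu> ^ (n div 2) * C" for n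
    proof -
      have "nrm (S n) = cmod \<mu> ^ (n div 2) * nrm (S (n mod 2))"
        unfolding S_def by (subst stt_pow[OF eig]) (simp add: nrm_smul norm_power)
      moreover have "nrm (S (n mod 2)) \<le> C"
      proof (cases "even n")
        case True then show ?thesis using nrm0[of "S 1"] by (simp add: C_def S_def)
      next
        case False then show ?thesis using nrm0[of v0] by (simp add: C_def S_def odd_iff_mod_2_eq_one)
      qed
      ultimately show ?thesis by (simp add: mult_left_mono)
    qed
    define Bc where "Bc = real \<alpha> * (C * K)^2"
    have Bc0: "Bc \<ge> 0" by (simp add: Bc_def)
    have Wb: "W n \<le> real \<alpha> * (real \<alpha> * real \<beta>) ^ (n div 2)" for n
    proof -
      have "real \<alpha> ^ ((n + 1) div 2) \<le> real \<alpha> ^ (n div 2 + 1)"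
        using a1 by (intro power_increasing) auto
      then have "W n \<le> real \<alpha> ^ (n div 2 + 1) * real \<beta> ^ (n div 2)"
        unfolding W_def by (simp add: mult_right_mono)
      also have "\<dots> = real \<alpha> * (real \<alpha> * real \<beta>) ^ (n div 2)"
        by (simp add: power_mult_distrib)
      finally show ?thesis .
    qed
    have hb: "h n x \<le> Bc * q ^ (n div 2)" if x: "x \<in> {real n..real n + 1}" for n x
    proof -
      define m where "m = n div 2"
      have "cmod (Phi w (S n) (x - real n)) \<le> nrm (S n) * K" using x by (intro Phib) auto
      also have "\<dots> \<le> cmod \<mu> ^ m * C * K" using nrmS[of n] K0 unfolding m_def by (simp add: mult_right_mono)
      finally have p1: "(cmod (Phi w (S n) (x - real n)))^2 \<le> (cmod \<mu> ^ m * C * K)^2"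
        by (intro power_mono) auto
      have "h n x \<le> (real \<alpha> * (real \<alpha> * real \<beta>) ^ m) * (cmod \<mu> ^ m * C * K)^2"
        unfolding h_def using Wb[of n] p1 unfolding m_def
        by (intro mult_mono) (auto simp: W_def)
      also have "\<dots> = Bc * q ^ m"
        by (simp add: Bc_def q_def power_mult_distrib power2_eq_square algebra_simps)
      finally show ?thesis unfolding m_def .
    qed
    have hint: "h n integrable_on {real n..real n + 1}" for n
      unfolding h_def by (intro integrable_continuous_real continuous_intros Phi_cont)
    have fh: "f x = h n x" if "x \<in> {real n..real n + 1} - {real n + 1}" for n x
    proof -
      have "\<lfloor>x\<rfloor> = int n" using that by (simp add: floor_eq_iff)
      then show ?thesis using YB[of x n] that by (simp add: f_def h_def W_def)
    qed
    have fint: "f integrable_on {real n..real n + 1}" for n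
      by (rule integrable_spike_finite[where S="{real n + 1}" and f="h n"]) (use fh hint in auto)
    have fb: "integral {real n..real n + 1} f \<le> Bc * q ^ (n div 2)" for n
    proof -
      have "integral {real n..real n + 1} f = integral {real n..real n + 1} (h n)"
        by (rule integral_spike[of "{real n + 1}"]) (use fh in auto)
      also have "\<dots> \<le> integral {real n..real n + 1} (\<lambda>_. Bc * q ^ (n div 2))"
        by (rule integral_le[OF hint]) (use hb in auto)
      also have "\<dots> = Bc * q ^ (n div 2)" by simp
      finally show ?thesis .
    qed
    have P: "f integrable_on {0..2 * real k} \<and> integral {0..2 * real k} f \<le> 2 * Bc * (\<Sum>m<k. q^m)" for k
    proof (induction k)
      case 0 then show ?case using integrable_on_refl[of f "0::real"] by simp
    next
      case (Suc k)
      have i1: "f integrable_on {2 * real k..2 * real k + 1}" using fint[of "2*k"] by simp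
      have i2: "f integrable_on {2 * real k + 1..2 * real k + 2}" using fint[of "2*k+1"] by (simp add: add_ac)
      have b1: "integral {2 * real k..2 * real k + 1} f \<le> Bc * q ^ k" using fb[of "2*k"] by simp
      have b2: "integral {2 * real k + 1..2 * real k + 2} f \<le> Bc * q ^ k" using fb[of "2*k+1"] by (simp add: add_ac)
      have j1: "f integrable_on {0..2 * real k + 1}"
        using Suc.IH i1 by (intro Henstock_Kurzweil_Integration.integrable_combine[of 0 "2 * real k" "2 * real k + 1"]) auto
      have j2: "f integrable_on {0..2 * real k + 2}"
        using j1 i2 by (intro Henstock_Kurzweil_Integration.integrable_combine[of 0 "2 * real k + 1" "2 * real k + 2"]) auto
      have "integral {0..2 * real k + 2} f = integral {0..2 * real k + 1} f + integral {2 * real k + 1..2 * real k + 2} f"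
        using j2 by (intro Henstock_Kurzweil_Integration.integral_combine[symmetric]) auto
      also have "integral {0..2 * real k + 1} f = integral {0..2 * real k} f + integral {2 * real k..2 * real k + 1} f"
        using j1 by (intro Henstock_Kurzweil_Integration.integral_combine[symmetric]) auto
      finally have "integral {0..2 * real k + 2} f \<le> 2 * Bc * (\<Sum>m<k. q^m) + Bc * q ^ k + Bc * q ^ k"
        using Suc.IH b1 b2 by linarith
      also have "\<dots> = 2 * Bc * (\<Sum>m<Suc k. q^m)" by (simp add: algebra_simps)
      finally show ?case using j2 by (simp add: algebra_simps)
    qed
    have gsum: "(\<Sum>m<k. q^m) \<le> 1 / (1 - q)" for k
    proof -
      have "(\<Sum>m<k. q^m) = (1 - q^k) / (1 - q)" using q1' by (simp add: sum_gp_strict)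
      also have "\<dots> \<le> 1 / (1 - q)" using q0 q1' by (intro divide_right_mono) auto
      finally show ?thesis .
    qed
    define g where "g k x = (if x \<in> {0..2 * real k} then f x else 0)" for k x
    have gI: "(g k has_integral integral {0..2 * real k} f) {0..}" for k
      unfolding g_def using has_integral_restrict[of "{0..2 * real k}" "{0..}" f] P[of k]
      by (auto simp: integrable_integral)
    have mc: "f integrable_on {0..} \<and> ((\<lambda>k. integral {0..} (g k)) \<longlongrightarrow> integral {0..} f) sequentially"
    proof (rule monotone_convergence_increasing)
      show "g k integrable_on {0..}" for k using gI by blast
      show "g k x \<le> g (Suc k) x" if "x \<in> {0..}" for k x
        using f0[of x] by (auto simp: g_def)
      show "((\<lambda>k. g k x) \<longlongrightarrow> f x) sequentially" if "x \<in> {0..}" for x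
      proof (rule tendsto_eventually)
        show "\<forall>\<^sub>F k in sequentially. g k x = f x"
          unfolding eventually_sequentially
        proof (intro exI[of _ "nat \<lceil>x\<rceil>"] allI impI)
          fix k assume "nat \<lceil>x\<rceil> \<le> k"
          then have "x \<le> 2 * real k" using that by linarith
          then show "g k x = f x" using that by (simp add: g_def)
        qed
      qed
      show "bounded (range (\<lambda>k. integral {0..} (g k)))"
        unfolding bounded_iff
      proof (intro exI[of _ "2 * Bc * (1 / (1 - q))"] ballI)
        fix y assume "y \<in> range (\<lambda>k. integral {0..} (g k))"
        then obtain k where y: "y = integral {0..2 * real k} f" using gI integral_unique by blast
        have "0 \<le> y" unfolding y using P[of k] f0 by (intro integral_nonneg) auto
        moreover have "y \<le> 2 * Bc * (1 / (1 - q))"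
          using P[of k] gsum[of k] Bc0 y by (smt (verit) mult_left_mono)
        ultimately show "norm y \<le> 2 * Bc * (1 / (1 - q))" by simp
      qed
    qed
    then show ?thesis unfolding f_def by blast
  qed
  show ?thesis
    by (rule exI[of _ Y], rule exI[of _ D]) (use init cont der jump integ in blast)
qed


lemma atMost_leb: "{..(1::real)} \<in> sets lebesgue"
  by simp

lemma floor_ceil: "nat (1 - \<lceil>x\<rceil>) = nat \<lfloor>1 - x\<rfloor>"
proof -
  have "\<lfloor>1 - x\<rfloor> = 1 - \<lceil>x\<rceil>"
    unfolding floor_eq_iff using le_of_int_ceiling[of x] ceiling_correct[of x] by auto
  then show ?thesis by simp
qed

lemma img: "(\<lambda>x::real. 1 - x) ` {..1} = {0..}"
proof safe
  fix t :: real assume "0 \<le> t"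
  then show "t \<in> (\<lambda>x. 1 - x) ` {..1}" by (intro rev_image_eqI[of "1 - t"]) auto
qed auto


lemma stepf_cc: "stepf (om la) g v = (cc la * fst v + ss la * snd v, (cc' la * fst v + cc la * snd v)/g)"
  by (simp add: stepf_def cc_def ss_def cc'_def)

lemma eig_v:
  fixes a b :: nat and la \<mu> :: complex
  assumes a: "a \<ge> 1" and b: "b \<ge> 1"
    and m: "\<mu>^2 - trT (of_nat a) (of_nat b) (cc la) * \<mu> + 1/(of_nat a * of_nat b) = 0"
  shows "stepf (om la) (of_nat b) (stepf (om la) (of_nat a)
           (ss la * cc la * (1 + 1/of_nat a), \<mu> - (cc la)^2 - ss la * cc' la / of_nat a))
         = smul \<mu> (ss la * cc la * (1 + 1/of_nat a), \<mu> - (cc la)^2 - ss la * cc' la / of_nat a)"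
proof -
  have a0: "(of_nat a :: complex) \<noteq> 0" and b0: "(of_nat b :: complex) \<noteq> 0" using a b by auto
  note E = step_eig[OF sc_id a0 b0 m]
  show ?thesis using E
    by (simp add: stepf_cc smul_def)
qed

lemma q_bound:
  assumes "\<delta>B \<ge> 1" "\<delta>R \<ge> 1" "cmod \<mu> < 1 / sqrt (real (\<delta>B * \<delta>R))"
  shows "(cmod \<mu>)^2 * (real \<delta>B * real \<delta>R) < 1"
proof -
  define p where "p = real \<delta>B * real \<delta>R"
  have "1 * 1 \<le> real \<delta>B * real \<delta>R" using assms(1,2) by (intro mult_mono) auto
  then have p: "p \<ge> 1" by (simp add: p_def)
  have "cmod \<mu> * sqrt p < 1" using assms(3) p by (simp add: p_def field_simps)
  moreover have "0 \<le> cmod \<mu> * sqrt p" using p by simp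
  ultimately have "(cmod \<mu> * sqrt p)^2 < 1" by (simp add: abs_square_less_1)
  then show ?thesis using p by (simp add: power_mult_distrib p_def)
qed

theorem theorem4p4:
  fixes \<delta>B \<delta>R :: nat and la :: complex
  assumes "\<delta>B \<ge> 1" and "\<delta>R \<ge> 1"
    and "la \<notin> sigma1 \<delta>B \<delta>R"
  shows
    "(\<exists>(Y :: real \<Rightarrow> complex) (D :: nat \<Rightarrow> real \<Rightarrow> complex).
        (\<forall>x\<in>{0..1}. Y x = Vfun \<delta>B \<delta>R x la)
      \<and> continuous_on {0..} Y
      \<and> (\<forall>n::nat. \<forall>x\<in>{real n..real n + 1}.
            (Y has_vector_derivative D n x) (at x within {real n..real n + 1})
          \<and> (D n has_vector_derivative (- la * Y x)) (at x within {real n..real n + 1}))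
      \<and> (\<forall>n::nat. n \<ge> 1 \<longrightarrow> D n (real n) = D (n - 1) (real n) / jump_coeff \<delta>B \<delta>R n)
      \<and> (\<lambda>x. weight0 \<delta>B \<delta>R x * (cmod (Y x))\<^sup>2) integrable_on {0..})
   \<and> (\<exists>(Y :: real \<Rightarrow> complex) (D :: nat \<Rightarrow> real \<Rightarrow> complex).
        (\<forall>x\<in>{0..1}. Y x = Ufun \<delta>B \<delta>R x la)
      \<and> continuous_on {..1} Y
      \<and> (\<forall>k::nat. \<forall>x\<in>{- real k..1 - real k}.
            (Y has_vector_derivative D k x) (at x within {- real k..1 - real k})
          \<and> (D k has_vector_derivative (- la * Y x)) (at x within {- real k..1 - real k}))
      \<and> (\<forall>k::nat. D (k + 1) (- real k) = D k (- real k) / jump_coeff \<delta>B \<delta>R k)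
      \<and> (\<lambda>x. weight1 \<delta>B \<delta>R x * (cmod (Y x))\<^sup>2) integrable_on {..1})"
proof -
  note B = assms(1) and R = assms(2)
  define \<mu> where "\<mu> = mu_minus \<delta>B \<delta>R la"
  define w where "w = om la"
  have m1: "\<mu>^2 - trT (of_nat \<delta>B) (of_nat \<delta>R) (cc la) * \<mu> + 1/(of_nat \<delta>B * of_nat \<delta>R) = 0"
    and mlt: "cmod \<mu> < 1 / sqrt (real (\<delta>B * \<delta>R))"
    using mu_props[OF assms] unfolding \<mu>_def by auto
  have m2: "\<mu>^2 - trT (of_nat \<delta>R) (of_nat \<delta>B) (cc la) * \<mu> + 1/(of_nat \<delta>R * of_nat \<delta>B) = 0"
    using m1 by (simp add: trT_sym mult.commute)
  have w2: "w^2 = la" by (simp add: w_def om_def)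
  have qB: "(cmod \<mu>)^2 * (real \<delta>B * real \<delta>R) < 1" by (rule q_bound[OF B R mlt])
  have qR: "(cmod \<mu>)^2 * (real \<delta>R * real \<delta>B) < 1" using qB by (simp add: mult.commute)
  show ?thesis
  proof
    define v0 where "v0 = (ss la * cc la * (1 + 1/of_nat \<delta>B), \<mu> - (cc la)^2 - ss la * cc' la / of_nat \<delta>B)"
    have eig: "stepf w (of_nat \<delta>R) (stepf w (of_nat \<delta>B) v0) = smul \<mu> v0"
      unfolding v0_def w_def by (rule eig_v[OF B R m1])
    obtain Y D where Y1: "\<forall>x\<in>{0..1}. Y x = Phi w v0 x" and Y2: "continuous_on {0..} Y"
      and Y3: "\<forall>n::nat. \<forall>x\<in>{real n..real n + 1}. (Y has_vector_derivative D n x) (at x within {real n..real n + 1})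
         \<and> (D n has_vector_derivative (- (w^2) * Y x)) (at x within {real n..real n + 1})"
      and Y4: "\<forall>n::nat. n \<ge> 1 \<longrightarrow> D n (real n) = D (n - 1) (real n) / jc \<delta>B \<delta>R n"
      and Y5: "(\<lambda>x. real (\<delta>B ^ ((nat \<lfloor>x\<rfloor> + 1) div 2) * \<delta>R ^ (nat \<lfloor>x\<rfloor> div 2)) * (cmod (Y x))^2) integrable_on {0..}"
      using construct0[OF B R eig qB] by blast
    have jceq: "jc \<delta>B \<delta>R n = jump_coeff \<delta>B \<delta>R n" for n by (simp add: jc_def jump_coeff_def)
    have weq: "weight0 \<delta>B \<delta>R x = real (\<delta>B ^ ((nat \<lfloor>x\<rfloor> + 1) div 2) * \<delta>R ^ (nat \<lfloor>x\<rfloor> div 2))" for x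
      by (simp add: weight0_def edges0_def)
    have veq: "Phi w v0 x = Vfun \<delta>B \<delta>R x la" for x
      by (simp add: Phi_def v0_def Vfun_def w_def \<mu>_def)
    show "\<exists>(Y :: real \<Rightarrow> complex) (D :: nat \<Rightarrow> real \<Rightarrow> complex).
        (\<forall>x\<in>{0..1}. Y x = Vfun \<delta>B \<delta>R x la)
      \<and> continuous_on {0..} Y
      \<and> (\<forall>n::nat. \<forall>x\<in>{real n..real n + 1}.
            (Y has_vector_derivative D n x) (at x within {real n..real n + 1})
          \<and> (D n has_vector_derivative (- la * Y x)) (at x within {real n..real n + 1}))
      \<and> (\<forall>n::nat. n \<ge> 1 \<longrightarrow> D n (real n) = D (n - 1) (real n) / jump_coeff \<delta>B \<delta>R n)
      \<and> (\<lambda>x. weight0 \<delta>B \<delta>R x * (cmod (Y x))\<^sup>2) integrable_on {0..}"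
      apply (rule exI[of _ Y], rule exI[of _ D])
      using Y1 Y2 Y3 Y4 Y5 by (simp add: veq jceq weq w2)
  next
    define v0 where "v0 = (ss la * cc la * (1 + 1/of_nat \<delta>R), \<mu> - (cc la)^2 - ss la * cc' la / of_nat \<delta>R)"
    have eig0: "stepf w (of_nat \<delta>B) (stepf w (of_nat \<delta>R) v0) = smul \<mu> v0"
      unfolding v0_def w_def by (rule eig_v[OF R B m2])
    have eig: "stepf w (of_nat \<delta>B) (stepf w (of_nat \<delta>R) (smul (-1) v0)) = smul \<mu> (smul (-1) v0)"
      using eig0 by (simp add: stepf_smul smul_mult mult.commute)
    obtain Y D where Y1: "\<forall>x\<in>{0..1}. Y x = Phi w (smul (-1) v0) x" and Y2: "continuous_on {0..} Y"
      and Y3: "\<forall>n::nat. \<forall>x\<in>{real n..real n + 1}. (Y has_vector_derivative D n x) (at x within {real n..real n + 1})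
         \<and> (D n has_vector_derivative (- (w^2) * Y x)) (at x within {real n..real n + 1})"
      and Y4: "\<forall>n::nat. n \<ge> 1 \<longrightarrow> D n (real n) = D (n - 1) (real n) / jc \<delta>R \<delta>B n"
      and Y5: "(\<lambda>x. real (\<delta>R ^ ((nat \<lfloor>x\<rfloor> + 1) div 2) * \<delta>B ^ (nat \<lfloor>x\<rfloor> div 2)) * (cmod (Y x))^2) integrable_on {0..}"
      using construct0[OF R B eig qR] by blast
    define Z where "Z x = Y (1 - x)" for x
    define E where "E k x = - D k (1 - x)" for k x
    have Zf: "Z = (\<lambda>x. Y (1 - x))" by (simp add: Z_def fun_eq_iff)
    have Ef: "E k = (\<lambda>x. - D k (1 - x))" for k by (simp add: E_def fun_eq_iff)
    have Z1: "\<forall>x\<in>{0..1}. Z x = Ufun \<delta>B \<delta>R x la"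
    proof
      fix x :: real assume "x \<in> {0..1}"
      then have "Z x = Phi w (smul (-1) v0) (1 - x)" using Y1 by (simp add: Z_def)
      also have "\<dots> = - Phi w v0 (1 - x)" by (simp add: Phi_smul)
      also have "\<dots> = Ufun \<delta>B \<delta>R x la"
        by (simp add: Phi_def v0_def Ufun_def w_def \<mu>_def algebra_simps)
      finally show "Z x = Ufun \<delta>B \<delta>R x la" .
    qed
    have Z2: "continuous_on {..1} Z"
      unfolding Z_def
      by (rule continuous_on_compose2[OF Y2]) (auto intro!: continuous_intros)
    have Z3: "(Z has_vector_derivative E k x) (at x within {- real k..1 - real k})
          \<and> (E k has_vector_derivative (- la * Z x)) (at x within {- real k..1 - real k})"
      if x: "x \<in> {- real k..1 - real k}" for k x
    proof -
      have x': "1 - x \<in> {real k..real k + 1}" using x by auto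
      have im: "(\<lambda>x. 1 - x) ` {- real k..1 - real k} \<subseteq> {real k..real k + 1}" by auto
      have d1: "((\<lambda>x::real. 1 - x) has_vector_derivative -1) (at x within {- real k..1 - real k})"
        by (auto intro!: derivative_eq_intros)
      have y1: "(Y has_vector_derivative D k (1 - x)) (at (1 - x) within (\<lambda>x. 1 - x) ` {- real k..1 - real k})"
        using Y3 x' im has_vector_derivative_within_subset by blast
      have y2: "(D k has_vector_derivative (- (w^2) * Y (1 - x))) (at (1 - x) within (\<lambda>x. 1 - x) ` {- real k..1 - real k})"
        using Y3 x' im has_vector_derivative_within_subset by blast
      have "((Y \<circ> (\<lambda>x. 1 - x)) has_vector_derivative ((-1) *\<^sub>R D k (1 - x))) (at x within {- real k..1 - real k})"
        by (rule vector_diff_chain_within[OF d1 y1])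
      then have r1: "(Z has_vector_derivative E k x) (at x within {- real k..1 - real k})"
        by (simp add: Zf Ef o_def)
      have "((D k \<circ> (\<lambda>x. 1 - x)) has_vector_derivative ((-1) *\<^sub>R (- (w^2) * Y (1 - x)))) (at x within {- real k..1 - real k})"
        by (rule vector_diff_chain_within[OF d1 y2])
      then have "((\<lambda>x. - (D k \<circ> (\<lambda>x. 1 - x)) x) has_vector_derivative - ((-1) *\<^sub>R (- (w^2) * Y (1 - x)))) (at x within {- real k..1 - real k})"
        by (rule derivative_intros)
      then have r2: "(E k has_vector_derivative (- la * Z x)) (at x within {- real k..1 - real k})"
        by (simp add: Zf Ef Z_def o_def w2)
      show ?thesis using r1 r2 by blast
    qed
    have Z4: "E (k + 1) (- real k) = E k (- real k) / jump_coeff \<delta>B \<delta>R k" for k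
    proof -
      have "D (Suc k) (real (Suc k)) = D k (real (Suc k)) / jc \<delta>R \<delta>B (Suc k)" using Y4 by auto
      moreover have "jc \<delta>R \<delta>B (Suc k) = jump_coeff \<delta>B \<delta>R k" by (simp add: jc_def jump_coeff_def)
      ultimately show ?thesis by (simp add: E_def add_ac)
    qed
    have Z5: "(\<lambda>x. weight1 \<delta>B \<delta>R x * (cmod (Z x))\<^sup>2) integrable_on {..1}"
    proof -
      define G where "G t = real (\<delta>R ^ ((nat \<lfloor>t\<rfloor> + 1) div 2) * \<delta>B ^ (nat \<lfloor>t\<rfloor> div 2)) * (cmod (Y t))^2" for t
      have Gi: "G absolutely_integrable_on {0..}"
        using Y5 unfolding G_def by (intro nonnegative_absolutely_integrable_1) auto
      have "(\<lambda>x. \<bar>-1\<bar> * G (1 - x)) absolutely_integrable_on {..1} \<and>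
           integral {..1} (\<lambda>x. \<bar>-1\<bar> * G (1 - x)) = integral ((\<lambda>x. 1 - x) ` {..1}) G
         \<longleftrightarrow> G absolutely_integrable_on ((\<lambda>x. 1 - x) ` {..1}) \<and> integral ((\<lambda>x. 1 - x) ` {..1}) G = integral ((\<lambda>x. 1 - x) ` {..1}) G"
        by (rule has_absolute_integral_change_of_variables_1'[where g'="\<lambda>_. -1"])
           (auto intro!: derivative_eq_intros simp: inj_on_def atMost_leb)
      then have "(\<lambda>x. G (1 - x)) absolutely_integrable_on {..1}" using Gi img by simp
      then have "(\<lambda>x. G (1 - x)) integrable_on {..1}" unfolding absolutely_integrable_on_def by blast
      moreover have "G (1 - x) = weight1 \<delta>B \<delta>R x * (cmod (Z x))\<^sup>2" for x
        by (simp add: G_def Z_def weight1_def edges1_def floor_ceil)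
      ultimately show ?thesis by simp
    qed
    show "\<exists>(Y :: real \<Rightarrow> complex) (D :: nat \<Rightarrow> real \<Rightarrow> complex).
        (\<forall>x\<in>{0..1}. Y x = Ufun \<delta>B \<delta>R x la)
      \<and> continuous_on {..1} Y
      \<and> (\<forall>k::nat. \<forall>x\<in>{- real k..1 - real k}.
            (Y has_vector_derivative D k x) (at x within {- real k..1 - real k})
          \<and> (D k has_vector_derivative (- la * Y x)) (at x within {- real k..1 - real k}))
      \<and> (\<forall>k::nat. D (k + 1) (- real k) = D k (- real k) / jump_coeff \<delta>B \<delta>R k)
      \<and> (\<lambda>x. weight1 \<delta>B \<delta>R x * (cmod (Y x))\<^sup>2) integrable_on {..1}"
      apply (rule exI[of _ Z], rule exI[of _ E])
      using Z1 Z2 Z3 Z4 Z5 by blast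
  qed
qed


end
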